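(* For every $n\times r$ basis matrix $P$ and every positive integer $s$, $\delta_s(I-PP')=\kappa_s^2(P)$.
   Context: A basis matrix is a real matrix $P$ with $P'P=I$. For $T\subseteq\{1,\dots,n\}$, $I_T$ is the submatrix of the $n\times n$ identity with columns in $T$, and $\Psi_T:=\Psi I_T$. The $s$-restricted isometry constant $\delta_s(\Psi)$ of an $n\times m$ matrix $\Psi$ is the smallest real number such that $(1-\delta_s)\|x\|_2^2\le\|\Psi_Tx\|_2^2\le(1+\delta_s)\|x\|_2^2$ for all $T$ with $|T|\le s$ and all $x\in\mathbb R^{|T|}$. The denseness coefficient is $\kappa_s(B):=\max_{|T|\le s}\|I_T'\,\mathrm{basis}(B)\|_2$, where $\mathrm{basis}(B)$ is a basis matrix with the same column span as $B$; for a basis matrix $P$, $\kappa_s(P)=\max_{|T|\le s}\|I_T'P\|_2$. *)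

theory Defs
  imports "HOL-Analysis.Analysis"
begin

definition basis_matrix :: "real^'r^'n \<Rightarrow> bool" where
  "basis_matrix P \<longleftrightarrow> transpose P ** P = mat 1"

text \<open>I_T' v : the entries of v indexed by T. We keep it as a vector of the ambient
  dimension with the entries outside T set to zero (same Euclidean norm).\<close>
definition restr :: "'n set \<Rightarrow> real^'n \<Rightarrow> real^'n" where
  "restr T v = (\<chi> i. if i \<in> T then v $ i else 0)"

text \<open>s-restricted isometry constant. Psi_T x with x in R^|T| equals Psi *v (I_T x), and
  I_T x ranges exactly over the vectors supported in T, with the same norm.\<close>
definition ric :: "nat \<Rightarrow> real^'m^'n \<Rightarrow> real" where
  "ric s \<Psi> = (LEAST \<delta>. \<forall>T::'m set. card T \<le> s \<longrightarrow>
      (\<forall>x::real^'m. (\<forall>i. i \<notin> T \<longrightarrow> x $ i = 0) \<longrightarrow>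
         (1 - \<delta>) * (norm x)^2 \<le> (norm (\<Psi> *v x))^2 \<and>
         (norm (\<Psi> *v x))^2 \<le> (1 + \<delta>) * (norm x)^2))"

definition kappa :: "nat \<Rightarrow> real^'r^'n \<Rightarrow> real" where
  "kappa s P = Max {onorm (\<lambda>x. restr T (P *v x)) | T::'n set. card T \<le> s}"

end

theory Submission
  imports Defs
begin

lemma adj: "inner ((P::real^'r^'n) *v y) x = inner y (transpose P *v x)"
  by (metis dot_lmul_matrix inner_commute transpose_matrix_vector)

lemma restr_inner: "inner (restr T u) v = inner u (restr T v)"
  unfolding restr_def inner_vec_def by (auto intro!: sum.cong)

lemma restr_supp: "(\<forall>i. i \<notin> T \<longrightarrow> x $ i = 0) \<Longrightarrow> restr T x = x"
  unfolding restr_def by (auto simp: vec_eq_iff)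

lemma restr_supp2: "i \<notin> T \<Longrightarrow> restr T x $ i = 0"
  unfolding restr_def by auto

lemma restr_norm: "norm (restr T (x::real^'n)) \<le> norm x"
  unfolding norm_vec_def restr_def
  by (auto intro!: L2_set_mono)

lemma restr_linear: "bounded_linear (\<lambda>x::real^'r. restr T ((P::real^'r^'n) *v x))"
proof -
  have "linear (\<lambda>x::real^'r. restr T (P *v x))"
    by (rule linearI) (auto simp: restr_def vec_eq_iff matrix_vector_right_distrib
         matrix_vector_mult_def sum_distrib_left algebra_simps sum.distrib)
  then show ?thesis using linear_conv_bounded_linear by blast
qed

lemma normM:
  assumes "basis_matrix P"
  shows "(norm ((mat 1 - P ** transpose P) *v x))^2 = (norm x)^2 - (norm (transpose P *v x))^2"
proof -
  define y where "y = transpose P *v x"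
  have e: "(mat 1 - P ** transpose P) *v x = x - P *v y"
    unfolding y_def
    by (simp add: matrix_vector_mult_diff_rdistrib matrix_vector_mul_assoc del: transpose_matrix_vector)
  have py: "inner (P *v y) (P *v y) = inner y y"
  proof -
    have "inner (P *v y) (P *v y) = inner y (transpose P *v (P *v y))" by (rule adj)
    also have "\<dots> = inner y ((transpose P ** P) *v y)"
      by (simp only: matrix_vector_mul_assoc)
    finally show ?thesis using assms unfolding basis_matrix_def by simp
  qed
  have xy: "inner x (P *v y) = inner y y"
    using adj[of P y x] unfolding y_def[symmetric] by (simp add: inner_commute)
  show ?thesis unfolding e power2_norm_eq_inner y_def[symmetric]
    using py xy by (simp add: inner_diff_left inner_diff_right inner_commute)
qed

theorem lemma4:
  fixes P :: "real^'r^'n" and s :: nat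
  assumes "basis_matrix P" and "0 < s"
  shows "ric s (mat 1 - P ** transpose P) = (kappa s P)^2"
proof -
  let ?M = "mat 1 - P ** transpose P"
  let ?A = "\<lambda>T x. restr T (P *v x)"
  let ?S = "{onorm (?A T) | T::'n set. card T \<le> s}"
  have fin: "finite ?S"
  proof -
    have "?S \<subseteq> (\<lambda>T. onorm (?A T)) ` UNIV" by auto
    then show ?thesis by (rule finite_subset) simp
  qed
  have ne: "onorm (?A {}) \<in> ?S" by auto
  have kge: "onorm (?A T) \<le> kappa s P" if "card T \<le> s" for T
    unfolding kappa_def using fin that by (intro Max_ge) auto
  have k0: "0 \<le> kappa s P"
    using kge[of "{}"] onorm_pos_le[OF restr_linear[of "{}" P]] by (simp add: order_trans)
  have adjb: "norm (transpose P *v x) \<le> onorm (?A T) * norm x"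
    if supp: "\<forall>i. i \<notin> T \<longrightarrow> x $ i = 0" for T x
  proof -
    let ?z = "transpose P *v x"
    have "(norm ?z)^2 = inner (P *v ?z) x"
      by (simp add: adj power2_norm_eq_inner del: transpose_matrix_vector)
    also have "\<dots> = inner (?A T ?z) x"
      using restr_inner[of T "P *v ?z" x] restr_supp[OF supp] by simp
    also have "\<dots> \<le> norm (?A T ?z) * norm x" by (rule norm_cauchy_schwarz)
    also have "\<dots> \<le> onorm (?A T) * norm ?z * norm x"
      by (intro mult_right_mono onorm[OF restr_linear]) simp
    finally have h: "norm ?z * norm ?z \<le> (onorm (?A T) * norm x) * norm ?z"
      by (simp add: power2_eq_square algebra_simps)
    show ?thesis
    proof (cases "norm ?z = 0")
      case True then show ?thesis
        using onorm_pos_le[OF restr_linear] by (simp add: onorm_pos_le[OF restr_linear[of T P]])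
    next
      case False then show ?thesis using h
        by (metis mult_le_cancel_right norm_ge_zero order_le_less)
    qed
  qed
  define V where "V = (\<lambda>\<delta>::real. \<forall>T::'n set. card T \<le> s \<longrightarrow>
      (\<forall>x::real^'n. (\<forall>i. i \<notin> T \<longrightarrow> x $ i = 0) \<longrightarrow>
         (1 - \<delta>) * (norm x)^2 \<le> (norm (?M *v x))^2 \<and>
         (norm (?M *v x))^2 \<le> (1 + \<delta>) * (norm x)^2))"
  have ricV: "ric s ?M = (LEAST \<delta>. V \<delta>)" unfolding ric_def V_def by simp
  have inV: "V ((kappa s P)^2)"
    unfolding V_def
  proof (intro allI impI conjI)
    fix T :: "'n set" and x :: "real^'n"
    assume c: "card T \<le> s" and supp: "\<forall>i. i \<notin> T \<longrightarrow> x $ i = 0"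
    have "norm (transpose P *v x) \<le> kappa s P * norm x"
      using adjb[OF supp] kge[OF c] by (meson mult_right_mono norm_ge_zero order_trans)
    then have "(norm (transpose P *v x))^2 \<le> (kappa s P * norm x)^2"
      by (simp add: power_mono)
    then show "(1 - (kappa s P)^2) * (norm x)^2 \<le> (norm (?M *v x))^2"
      unfolding normM[OF assms(1)] by (simp add: algebra_simps power_mult_distrib)
    show "(norm (?M *v x))^2 \<le> (1 + (kappa s P)^2) * (norm x)^2"
      unfolding normM[OF assms(1)] by (simp add: algebra_simps)
  qed
  have minV: "(kappa s P)^2 \<le> d" if Vd: "V d" for d
  proof -
    obtain i :: 'n where True by simp
    have d0: "0 \<le> d"
    proof -
      have c1: "card {i} \<le> s" using assms(2) by simp
      have "(1 - d) * (norm (axis i (1::real)))^2 \<le> (norm (?M *v axis i 1))^2"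
      proof -
        have "\<forall>j. j \<notin> {i} \<longrightarrow> axis i (1::real) $ j = 0" by (simp add: axis_def)
        then show ?thesis using Vd c1 unfolding V_def by blast
      qed
      also have "\<dots> \<le> (norm (axis i (1::real)))^2"
        unfolding normM[OF assms(1)] by simp
      finally show ?thesis by simp
    qed
    have bd: "norm (?A T y) \<le> sqrt d * norm y" if c: "card T \<le> s" for T y
    proof -
      let ?w = "?A T y"
      have suppw: "\<forall>i. i \<notin> T \<longrightarrow> ?w $ i = 0" using restr_supp2 by blast
      have "(norm (transpose P *v ?w))^2 \<le> d * (norm ?w)^2"
        using Vd c suppw unfolding V_def normM[OF assms(1)] by (force simp: algebra_simps)
      then have "(norm (transpose P *v ?w))^2 \<le> (sqrt d * norm ?w)^2"
        using d0 by (simp add: power_mult_distrib)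
      then have tw: "norm (transpose P *v ?w) \<le> sqrt d * norm ?w"
        using d0 by (meson power2_le_imp_le mult_nonneg_nonneg norm_ge_zero real_sqrt_ge_zero)
      have "(norm ?w)^2 = inner (P *v y) (restr T ?w)"
        using restr_inner[of T "P *v y" ?w] by (simp add: power2_norm_eq_inner)
      also have "\<dots> = inner (P *v y) ?w" using restr_supp[OF suppw] by simp
      also have "\<dots> = inner y (transpose P *v ?w)" by (rule adj)
      also have "\<dots> \<le> norm y * norm (transpose P *v ?w)" by (rule norm_cauchy_schwarz)
      also have "\<dots> \<le> norm y * (sqrt d * norm ?w)" by (intro mult_left_mono tw) simp
      finally have h: "norm ?w * norm ?w \<le> (sqrt d * norm y) * norm ?w"
        by (simp add: power2_eq_square algebra_simps)
      show ?thesis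
      proof (cases "norm ?w = 0")
        case True then show ?thesis using d0 by simp
      next
        case False then show ?thesis using h
          by (metis mult_le_cancel_right norm_ge_zero order_le_less)
      qed
    qed
    have "kappa s P \<le> sqrt d"
      unfolding kappa_def using fin ne
      by (subst Max_le_iff) (auto intro!: onorm_le bd)
    then have "(kappa s P)^2 \<le> (sqrt d)^2" using k0 by (simp add: power_mono)
    then show ?thesis using d0 by simp
  qed
  show ?thesis unfolding ricV
    using inV minV by (intro Least_equality) auto
qed

end
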